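(* The function $\varphi\colon[0,1]\to[0,1]$, $\varphi(t)=\max(t,1/2)$, is $\mathfrak{cm}$-nonexpansive (with respect to the absolute value on $\mathbb{R}$): for all $n\in\mathbb{N}$, $s\in[0,1]$ and sequences $(t_i)_{i=1}^\infty\subset[0,1]$, $$\limsup_{i\to\infty}\sup_{A\subset\{1,\dots,n\}}\Big|\sum_{k\in A}(\varphi(t_{i+k})-\varphi(s))\Big|\le\limsup_{i\to\infty}\sup_{A\subset\{1,\dots,n\}}\Big|\sum_{k\in A}(t_{i+k}-s)\Big|.$$ *)

theory Defs
  imports "HOL-Analysis.Analysis"
begin

definition phi :: "real \<Rightarrow> real" where
  "phi t = max t (1/2)"

end

theory Submission
  imports Defs
begin

lemma term_prop:
  fixes x s :: real
  shows "(phi x - phi s) * ((x - s) - (phi x - phi s)) \<ge> 0"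
  unfolding phi_def by (cases "x \<le> s") (auto simp: max_def intro: mult_nonneg_nonneg mult_nonpos_nonpos)

lemma set_bound:
  fixes a b :: "nat \<Rightarrow> real" and S :: "nat set"
  assumes fin: "finite S" and ab: "\<And>k. a k * (b k - a k) \<ge> 0"
  and A: "A \<subseteq> S"
  shows "\<bar>\<Sum>k\<in>A. a k\<bar> \<le> Sup ((\<lambda>B. \<bar>\<Sum>k\<in>B. b k\<bar>) ` Pow S)"
proof -
  define P where "P = {k\<in>A. a k > 0}"
  define N where "N = {k\<in>A. a k < 0}"
  have finA: "finite A" using fin A finite_subset by blast
  have "(\<Sum>k\<in>A. a k) = (\<Sum>k\<in>{k\<in>A. a k \<noteq> 0}. a k)"
    by (rule sum.mono_neutral_right) (use finA in auto)
  also have "{k\<in>A. a k \<noteq> 0} = P \<union> N" unfolding P_def N_def by auto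
  also have "(\<Sum>k\<in>P \<union> N. a k) = (\<Sum>k\<in>P. a k) + (\<Sum>k\<in>N. a k)"
    by (rule sum.union_disjoint) (use finA in \<open>auto simp: P_def N_def\<close>)
  finally have eq: "(\<Sum>k\<in>A. a k) = (\<Sum>k\<in>P. a k) + (\<Sum>k\<in>N. a k)" .
  have p1: "0 \<le> (\<Sum>k\<in>P. a k)" by (rule sum_nonneg) (auto simp: P_def)
  have n1: "(\<Sum>k\<in>N. a k) \<le> 0" by (rule sum_nonpos) (auto simp: N_def)
  have pb: "\<And>k. k \<in> P \<Longrightarrow> a k \<le> b k"
  proof -
    fix k assume "k \<in> P" hence "a k > 0" by (auto simp: P_def)
    with ab[of k] show "a k \<le> b k" by (simp add: zero_le_mult_iff)
  qed
  have nb: "\<And>k. k \<in> N \<Longrightarrow> b k \<le> a k"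
  proof -
    fix k assume "k \<in> N" hence "a k < 0" by (auto simp: N_def)
    with ab[of k] show "b k \<le> a k" by (simp add: zero_le_mult_iff)
  qed
  have p2: "(\<Sum>k\<in>P. a k) \<le> (\<Sum>k\<in>P. b k)" by (rule sum_mono) (use pb in auto)
  have n2: "(\<Sum>k\<in>N. b k) \<le> (\<Sum>k\<in>N. a k)" by (rule sum_mono) (use nb in auto)
  have fim: "finite ((\<lambda>B. \<bar>\<Sum>k\<in>B. b k\<bar>) ` Pow S)" using fin by simp
  have "P \<in> Pow S" "N \<in> Pow S" using A by (auto simp: P_def N_def)
  hence u1: "\<bar>\<Sum>k\<in>P. b k\<bar> \<le> Sup ((\<lambda>B. \<bar>\<Sum>k\<in>B. b k\<bar>) ` Pow S)"
    and u2: "\<bar>\<Sum>k\<in>N. b k\<bar> \<le> Sup ((\<lambda>B. \<bar>\<Sum>k\<in>B. b k\<bar>) ` Pow S)"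
    using fim by (auto intro!: le_cSup_finite)
  show ?thesis using eq p1 n1 p2 n2 u1 u2 by linarith
qed

theorem proposition6p1:
  fixes n :: nat and s :: real and t :: "nat \<Rightarrow> real"
  assumes "s \<in> {0..1}"
    and "\<And>i. i \<ge> 1 \<Longrightarrow> t i \<in> {0..1}"
  shows "limsup (\<lambda>i. ereal (Sup ((\<lambda>A. \<bar>\<Sum>k\<in>A. phi (t (i + k)) - phi s\<bar>) ` Pow {1..n})))
         \<le> limsup (\<lambda>i. ereal (Sup ((\<lambda>A. \<bar>\<Sum>k\<in>A. t (i + k) - s\<bar>) ` Pow {1..n})))"
proof (rule Limsup_mono, rule always_eventually, rule allI)
  fix i
  have "Sup ((\<lambda>A. \<bar>\<Sum>k\<in>A. phi (t (i + k)) - phi s\<bar>) ` Pow {1..n})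
        \<le> Sup ((\<lambda>A. \<bar>\<Sum>k\<in>A. t (i + k) - s\<bar>) ` Pow {1..n})"
    by (rule cSup_least) (auto intro!: set_bound term_prop)
  thus "ereal (Sup ((\<lambda>A. \<bar>\<Sum>k\<in>A. phi (t (i + k)) - phi s\<bar>) ` Pow {1..n}))
        \<le> ereal (Sup ((\<lambda>A. \<bar>\<Sum>k\<in>A. t (i + k) - s\<bar>) ` Pow {1..n}))" by simp
qed

end
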